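(* Let $n\geq 2$. Let $H$ be the $n!\times(n-1)^2$ $0/1$ matrix with rows indexed by $S(n)$, columns indexed by ordered pairs $(i,j)$ with $i,j\in\{1,\dots,n-1\}$, and $(\pi,(i,j))$-entry equal to $1$ iff $\pi(i)=j$. Let $N$ be the submatrix of $H$ formed by the rows indexed by derangements of $\{1,\dots,n\}$, and let $W$ be the submatrix of $H$ formed by the columns indexed by the pairs $(i,i)$, $i\in\{1,\dots,n-1\}$. If $y\in\mathbb{R}^{(n-1)^2}$ satisfies $Ny=0$, then $Hy$ lies in the column space of $W$.
   Context: A derangement of $\{1,\dots,n\}$ is a permutation with no fixed points; $S(n)$ is the symmetric group on $\{1,\dots,n\}$. *)

theory Defs
  imports Complex_Main "HOL-Combinatorics.Permutations"
begin

definition derangement :: "nat \<Rightarrow> (nat \<Rightarrow> nat) \<Rightarrow> bool" where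
  "derangement n \<pi> \<longleftrightarrow> \<pi> permutes {1..n} \<and> (\<forall>i\<in>{1..n}. \<pi> i \<noteq> i)"

definition cols :: "nat \<Rightarrow> (nat \<times> nat) set" where
  "cols n = {1..n-1} \<times> {1..n-1}"

definition Hmat :: "(nat \<Rightarrow> nat) \<Rightarrow> nat \<times> nat \<Rightarrow> real" where
  "Hmat \<pi> p = (if \<pi> (fst p) = snd p then 1 else 0)"

definition Hmul :: "nat \<Rightarrow> (nat \<times> nat \<Rightarrow> real) \<Rightarrow> (nat \<Rightarrow> nat) \<Rightarrow> real" where
  "Hmul n y \<pi> = (\<Sum>p\<in>cols n. Hmat \<pi> p * y p)"

end

theory Submission
  imports Defs
begin

lemma perm_fin:
  assumes "\<And>x. x \<notin> {1..n::nat} \<Longrightarrow> p x = x" "p ` {1..n} \<subseteq> {1..n}" "inj_on p {1..n}"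
  shows "p permutes {1..n}"
proof (rule bij_imp_permutes)
  have "p ` {1..n} = {1..n}" using endo_inj_surj[OF _ assms(2,3)] by simp
  then show "bij_betw p {1..n} {1..n}" using assms(3) by (simp add: bij_betw_def)
qed (use assms in auto)

lemma HM:
  "Hmul n y \<pi> = (\<Sum>i\<in>{1..n-1}. if \<pi> i \<in> {1..n-1} then y (i, \<pi> i) else 0)"
proof -
  have "Hmul n y \<pi> = (\<Sum>i\<in>{1..n-1}. \<Sum>j\<in>{1..n-1}. Hmat \<pi> (i,j) * y (i,j))"
    unfolding Hmul_def cols_def by (simp add: sum.cartesian_product)
  also have "\<dots> = (\<Sum>i\<in>{1..n-1}. if \<pi> i \<in> {1..n-1} then y (i, \<pi> i) else 0)"
  proof (intro sum.cong refl)
    fix i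
    have "(\<Sum>j\<in>{1..n-1}. Hmat \<pi> (i,j) * y (i,j)) = (\<Sum>j\<in>{1..n-1}. if \<pi> i = j then y (i, \<pi> i) else 0)"
      by (rule sum.cong) (auto simp: Hmat_def)
    then show "(\<Sum>j\<in>{1..n-1}. Hmat \<pi> (i,j) * y (i,j)) = (if \<pi> i \<in> {1..n-1} then y (i, \<pi> i) else 0)"
      by (simp add: sum.delta)
  qed
  finally show ?thesis .
qed

lemma L12:
  fixes n :: nat and y :: "nat \<times> nat \<Rightarrow> real"
  assumes n: "n \<ge> 3"
    and hyp: "\<forall>\<pi>. derangement n \<pi> \<longrightarrow> Hmul n y \<pi> = 0"
  shows "y (1,2) = 0"
proof -
  define A where "A = {1..n-1}"
  define s where "s x = (if 1 \<le> x \<and> x < n then x+1 else if x = n then 1 else x)" for x :: nat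
  have ds: "derangement n s"
    unfolding derangement_def
  proof
    show "s permutes {1..n}"
      by (rule perm_fin) (use n in \<open>auto simp: s_def inj_on_def split: if_splits\<close>)
  qed (use n in \<open>auto simp: s_def\<close>)
  have Hs: "Hmul n y s = (\<Sum>i\<in>A. if i = n-1 then 0 else y (i, i+1))"
    unfolding HM A_def by (intro sum.cong refl) (auto simp: s_def)
  define t where "t = y (n-1, 1)"
  have eq: "y (k, k+1) = t" if k: "k \<in> {1..n-2}" for k
  proof -
    define s' where "s' x = (if x = k then n else if x = n then k+1 else if x = n-1 then 1
        else if 1 \<le> x \<and> x < n then x+1 else x)" for x :: nat
    have "k \<le> n - 1" using k by (simp, linarith)
    have kA: "k \<in> A" and nA: "n - 1 \<in> A" and fA: "finite A" using k n by (auto simp: A_def)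
    have ds': "derangement n s'"
      unfolding derangement_def
    proof
      show "s' permutes {1..n}"
        by (rule perm_fin) (use k n in \<open>auto simp: s'_def inj_on_def split: if_splits\<close>)
    qed (use k n in \<open>auto simp: s'_def\<close>)
    have Hs': "Hmul n y s' = (\<Sum>i\<in>A. if i = k then 0 else if i = n-1 then t else y (i, i+1))"
      unfolding HM A_def by (intro sum.cong refl) (use k n in \<open>auto simp: s'_def t_def\<close>)
    have "(\<Sum>i\<in>A. if i = n-1 then 0 else y (i, i+1)) =
          (\<Sum>i\<in>A. (if i = k then 0 else if i = n-1 then t else y (i, i+1))
             + (if i = k then y (k,k+1) else 0) - (if i = n-1 then t else 0))"
      by (intro sum.cong refl) (use k n in auto)
    also have "\<dots> = (\<Sum>i\<in>A. if i = k then 0 else if i = n-1 then t else y (i, i+1))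
             + (\<Sum>i\<in>A. if i = k then y (k,k+1) else 0) - (\<Sum>i\<in>A. if i = n-1 then t else 0)"
      by (simp only: sum_subtractf sum.distrib)
    also have "\<dots> = Hmul n y s' + y (k,k+1) - t"
      unfolding Hs' using kA nA fA by (simp only: sum.delta if_True)
    finally have "Hmul n y s = Hmul n y s' + y (k,k+1) - t" using Hs by simp
    with hyp ds ds' show ?thesis by simp
  qed
  have "Hmul n y s = (\<Sum>i\<in>{1..n-2}. y (i, i+1))"
  proof -
    have "A = insert (n-1) {1..n-2}" using n by (auto simp: A_def)
 have "n - 1 \<notin> {1..n-2}" using n by auto
    have "(\<Sum>i\<in>A. if i = n-1 then 0 else y (i, i+1))
        = (\<Sum>i\<in>{1..n-2}. if i = n-1 then 0 else y (i, i+1))"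
      apply (simp only: \<open>A = insert (n-1) {1..n-2}\<close>)
      apply (subst sum.insert)
        apply (rule finite_atLeastAtMost)
       apply fact
      apply (subst if_P[OF refl]) apply (rule add_0_left)
      done
    also have "\<dots> = (\<Sum>i\<in>{1..n-2}. y (i, i+1))"
      by (rule sum.cong) (use n in auto)
    finally show ?thesis unfolding Hs .
  qed
  also have "\<dots> = (\<Sum>i\<in>{1..n-2}. t)" by (rule sum.cong) (use eq in simp_all)
  also have "\<dots> = real (n-2) * t" by simp
  finally have "real (n-2) * t = 0" using hyp ds by simp
  then have "t = 0" using n by simp
  have o: "(1::nat) \<in> {1..n-2}" using n by simp
  have "y (1, 1+1) = t" by (rule eq[OF o])
  then show ?thesis using \<open>t = 0\<close> by (simp add: numeral_2_eq_2)
qed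

lemma relabel:
  fixes n :: nat and y :: "nat \<times> nat \<Rightarrow> real" and g :: "nat \<Rightarrow> nat"
  assumes hyp: "\<forall>\<pi>. derangement n \<pi> \<longrightarrow> Hmul n y \<pi> = 0"
    and g: "g permutes {1..n-1}"
  shows "\<forall>\<pi>. derangement n \<pi> \<longrightarrow> Hmul n (\<lambda>p. y (g (fst p), g (snd p))) \<pi> = 0"
proof (intro allI impI)
  fix \<pi> assume d: "derangement n \<pi>"
  have gn: "g permutes {1..n}" by (rule permutes_subset[OF g]) auto
  define \<rho> where "\<rho> = g \<circ> \<pi> \<circ> inv g"
  have "derangement n \<rho>"
    unfolding derangement_def
  proof
    show "\<rho> permutes {1..n}" unfolding \<rho>_def
      using d gn by (intro permutes_compose permutes_inv) (auto simp: derangement_def)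
    show "\<forall>i\<in>{1..n}. \<rho> i \<noteq> i"
    proof
      fix i assume i: "i \<in> {1..n}"
      have "inv g i \<in> {1..n}" using i permutes_in_image[OF permutes_inv[OF gn]] by blast
      then have "\<pi> (inv g i) \<noteq> inv g i" using d by (auto simp: derangement_def)
      then show "\<rho> i \<noteq> i" unfolding \<rho>_def using permutes_inverses[OF gn]
        by (metis comp_apply)
    qed
  qed
  then have z: "Hmul n y \<rho> = 0" using hyp by blast
  define h where "h = (\<lambda>p::nat\<times>nat. (g (fst p), g (snd p)))"
  have bh: "bij_betw h (cols n) (cols n)"
  proof (rule bij_betw_byWitness[where f' = "\<lambda>p. (inv g (fst p), inv g (snd p))"])
    show "\<forall>a\<in>cols n. (inv g (fst (h a)), inv g (snd (h a))) = a"
      by (auto simp: h_def permutes_inverses[OF g])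
    show "\<forall>a'\<in>cols n. h (inv g (fst a'), inv g (snd a')) = a'"
      by (auto simp: h_def permutes_inverses[OF g])
    have gi: "g x \<in> {1..n-1}" if "x \<in> {1..n-1}" for x
      using that permutes_in_image[OF g] by blast
    have gi2: "inv g x \<in> {1..n-1}" if "x \<in> {1..n-1}" for x
      using that permutes_in_image[OF permutes_inv[OF g]] by blast
    show "h ` cols n \<subseteq> cols n"
      unfolding h_def cols_def using gi by (auto simp del: atLeastAtMost_iff)
    show "(\<lambda>p. (inv g (fst p), inv g (snd p))) ` cols n \<subseteq> cols n"
      unfolding cols_def using gi2 by (auto simp del: atLeastAtMost_iff)
  qed
  have "Hmul n y \<rho> = (\<Sum>p\<in>cols n. Hmat \<rho> (h p) * y (h p))"
    unfolding Hmul_def by (rule sum.reindex_bij_betw[OF bh, symmetric])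
  also have "\<dots> = Hmul n (\<lambda>p. y (g (fst p), g (snd p))) \<pi>"
    unfolding Hmul_def
  proof (rule sum.cong[OF refl])
    fix p :: "nat \<times> nat"
    have "(g (\<pi> (inv g (g (fst p)))) = g (snd p)) = (\<pi> (fst p) = snd p)"
      using permutes_inverses[OF gn] permutes_inj[OF gn] by (metis injD)
    then show "Hmat \<rho> (h p) * y (h p) = Hmat \<pi> p * y (g (fst p), g (snd p))"
      by (simp add: Hmat_def h_def \<rho>_def)
  qed
  finally show "Hmul n (\<lambda>p. y (g (fst p), g (snd p))) \<pi> = 0" using z by simp
qed

lemma offdiag:
  fixes n :: nat and y :: "nat \<times> nat \<Rightarrow> real"
  assumes n: "n \<ge> 2"
    and hyp: "\<forall>\<pi>. derangement n \<pi> \<longrightarrow> Hmul n y \<pi> = 0"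
    and a: "a \<in> {1..n-1}" and b: "b \<in> {1..n-1}" and ab: "a \<noteq> b"
  shows "y (a, b) = 0"
proof (cases "n = 2")
  case True then show ?thesis using a b ab by auto
next
  case False
  then have n3: "n \<ge> 3" using n by simp
  define g0 where "g0 = transpose 1 a"
  define g where "g = transpose (g0 2) b \<circ> g0"
  have one: "(1::nat) \<in> {1..n-1}" and two: "(2::nat) \<in> {1..n-1}" using n3 by auto
  have g0p: "g0 permutes {1..n-1}" unfolding g0_def by (rule permutes_swap_id[OF one a])
  have "g0 2 \<in> {1..n-1}" using two permutes_in_image[OF g0p] by blast
  then have gp: "g permutes {1..n-1}" unfolding g_def
    by (intro permutes_compose g0p permutes_swap_id b)
  have g1: "g 1 = a" unfolding g_def g0_def using ab
    by (auto simp: transpose_def)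
  have g2: "g 2 = b" unfolding g_def by (simp add: transpose_def)
  have "(\<lambda>p. y (g (fst p), g (snd p))) (1,2) = 0"
    by (rule L12[OF n3 relabel[OF hyp gp]])
  then show ?thesis using g1 g2 by simp
qed

theorem lemma11:
  fixes n :: nat and y :: "nat \<times> nat \<Rightarrow> real"
  assumes "n \<ge> 2"
    and "\<forall>\<pi>. derangement n \<pi> \<longrightarrow> Hmul n y \<pi> = 0"
  shows "\<exists>c :: nat \<Rightarrow> real. \<forall>\<pi>. \<pi> permutes {1..n} \<longrightarrow>
           Hmul n y \<pi> = (\<Sum>i\<in>{1..n-1}. Hmat \<pi> (i, i) * c i)"
proof (intro exI allI impI)
  fix \<pi> :: "nat \<Rightarrow> nat"
  show "Hmul n y \<pi> = (\<Sum>i\<in>{1..n-1}. Hmat \<pi> (i, i) * y (i, i))"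
    unfolding HM
  proof (rule sum.cong[OF refl])
    fix i assume i: "i \<in> {1..n-1}"
    show "(if \<pi> i \<in> {1..n-1} then y (i, \<pi> i) else 0) = Hmat \<pi> (i, i) * y (i, i)"
      using offdiag[OF assms, of i "\<pi> i"] i by (auto simp: Hmat_def)
  qed
qed

end
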